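(* Let $\mu$ be as in the context and let $(\Phi,\Phi^\star)$ be a pair of finite Young functions with $\Phi^\star$ the Legendre transform of $\Phi$, such that $\lim_{x\to\infty}\Phi^\star(x)/x^2=\infty$ and such that $x\mapsto\Phi^\star(\sqrt{x})$ (for $x\ge0$, extended evenly) is also a Young function. Suppose that for some $r_0\in[0,\infty)$ the partial Orlicz super Poincaré inequality holds: there is a function $\beta:(r_0,\infty)\to[0,\infty)$ such that for every $r>r_0$ and every admissible $f$, \[\int f^2\,d\mu\le r\int|\nabla f|^2\,d\mu+\beta(r)\,\|f\|_\Phi^2.\] Then there is a function $\tilde\beta:(8r_0,\infty)\to[0,\infty)$ (depending only on $\beta$, $\Phi$ and $\mu$) such that for every $r>8r_0$ and every admissible $f$, \[\int f^2\,d\mu\le r\int|\nabla f|^2\,d\mu+\tilde\beta(r)\Big(\int|f|\,d\mu\Big)^2.\]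
   Context: Setting: $V:\mathbb R^n\to\mathbb R$ smooth with $\int e^{-V}dx<\infty$, $\mu(dx)=Z^{-1}e^{-V(x)}dx$ a probability measure on $\mathbb R^n$; "admissible $f$" means $f\in L^2(\mu)$ locally Lipschitz with $\int|\nabla f|^2d\mu<\infty$. A Young function is an even convex function $\Phi:\mathbb R\to[0,\infty)$ with $\Phi(0)=0$ and $\lim_{x\to\infty}\Phi(x)=\infty$. The Legendre transform is $\Phi^\star(y)=\sup_x(xy-\Phi(x))$. The Luxemburg norm is $\|f\|_\Phi=\inf\{\lambda>0:\int\Phi(|f|/\lambda)\,d\mu\le1\}$. *)

theory Defs
  imports "HOL-Analysis.Analysis"
begin

coinductive smooth_fun :: "(real^'n \<Rightarrow> real) \<Rightarrow> bool" where
  "(\<forall>x. g differentiable (at x)) \<Longrightarrow>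
   (\<forall>i. smooth_fun (\<lambda>x. frechet_derivative g (at x) (axis i 1))) \<Longrightarrow> smooth_fun g"

definition gibbs :: "(real^'n \<Rightarrow> real) \<Rightarrow> (real^'n) measure" where
  "gibbs V = density lborel
     (\<lambda>x. ennreal (exp (- V x) / (\<integral>y. exp (- V y) \<partial>lborel)))"

text \<open>Gradient (where f is differentiable; locally Lipschitz f are differentiable a.e.).\<close>
definition grad :: "(real^'n \<Rightarrow> real) \<Rightarrow> real^'n \<Rightarrow> real^'n" where
  "grad f x = (if f differentiable (at x)
               then (\<chi> i. frechet_derivative f (at x) (axis i 1)) else 0)"

definition locally_lipschitz :: "(real^'n \<Rightarrow> real) \<Rightarrow> bool" where
  "locally_lipschitz f \<longleftrightarrow> (\<forall>x. \<exists>e>0. \<exists>C. lipschitz_on C (ball x e) f)"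

definition admissible :: "(real^'n) measure \<Rightarrow> (real^'n \<Rightarrow> real) \<Rightarrow> bool" where
  "admissible M f \<longleftrightarrow> f \<in> borel_measurable M \<and> integrable M (\<lambda>x. (f x)\<^sup>2)
     \<and> locally_lipschitz f \<and> integrable M (\<lambda>x. (norm (grad f x))\<^sup>2)"

definition young :: "(real \<Rightarrow> real) \<Rightarrow> bool" where
  "young \<Phi> \<longleftrightarrow> (\<forall>x. \<Phi> (- x) = \<Phi> x) \<and> convex_on UNIV \<Phi> \<and> (\<forall>x. 0 \<le> \<Phi> x)
     \<and> \<Phi> 0 = 0 \<and> filterlim \<Phi> at_top at_top"

definition legendre_of :: "(real \<Rightarrow> real) \<Rightarrow> (real \<Rightarrow> real) \<Rightarrow> bool" where
  "legendre_of \<Phi> \<Phi>' \<longleftrightarrow> (\<forall>y. bdd_above (range (\<lambda>x. x * y - \<Phi> x))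
     \<and> \<Phi>' y = (SUP x. x * y - \<Phi> x))"

text \<open>The set of admissible lambdas in the Luxemburg norm; it is nonempty iff the norm is finite.\<close>
definition lux_set :: "(real \<Rightarrow> real) \<Rightarrow> 'a measure \<Rightarrow> ('a \<Rightarrow> real) \<Rightarrow> real set" where
  "lux_set \<Phi> M f = {l. l > 0 \<and> (\<integral>\<^sup>+ x. ennreal (\<Phi> (\<bar>f x\<bar> / l)) \<partial>M) \<le> 1}"

definition lux_norm :: "(real \<Rightarrow> real) \<Rightarrow> 'a measure \<Rightarrow> ('a \<Rightarrow> real) \<Rightarrow> real" where
  "lux_norm \<Phi> M f = Inf (lux_set \<Phi> M f)"

end

theory Submission
  imports Defs
begin


lemma phi_bound:
  fixes \<Phi> \<Phi>s :: "real \<Rightarrow> real"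
  assumes Y1: "young \<Phi>" and Y2: "young \<Phi>s" and leg: "legendre_of \<Phi> \<Phi>s"
    and growth: "filterlim (\<lambda>x. \<Phi>s x / x\<^sup>2) at_top at_top"
    and eta: "\<eta> > 0"
  shows "\<exists>a\<ge>0. \<forall>x. \<Phi> x \<le> a * \<bar>x\<bar> + \<eta> * x\<^sup>2"
proof -
  define M where "M = 1 / (4 * \<eta>)"
  have Mpos: "M > 0" using eta by (simp add: M_def)
  from growth have "eventually (\<lambda>x. \<Phi>s x / x\<^sup>2 \<ge> M) at_top"
    by (simp add: filterlim_at_top)
  then obtain Y0 where Y0: "\<And>y. y \<ge> Y0 \<Longrightarrow> \<Phi>s y / y\<^sup>2 \<ge> M"
    by (auto simp: eventually_at_top_linorder)
  define Y where "Y = max Y0 1"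
  have Ypos: "Y > 0" by (simp add: Y_def)
  have even: "\<And>x. \<Phi>s (- x) = \<Phi>s x" and nn: "\<And>x. 0 \<le> \<Phi>s x"
    using Y2 by (auto simp: young_def)
  have big: "\<Phi>s y \<ge> M * y\<^sup>2" if "\<bar>y\<bar> \<ge> Y" for y
  proof -
    have "\<Phi>s \<bar>y\<bar> / \<bar>y\<bar>\<^sup>2 \<ge> M" using Y0[of "\<bar>y\<bar>"] that by (simp add: Y_def)
    moreover have "\<bar>y\<bar>\<^sup>2 > 0" using that Ypos by simp
    ultimately have "\<Phi>s \<bar>y\<bar> \<ge> M * \<bar>y\<bar>\<^sup>2" by (simp add: le_divide_eq)
    moreover have "\<Phi>s \<bar>y\<bar> = \<Phi>s y" using even by (cases "y \<ge> 0") auto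
    ultimately show ?thesis by simp
  qed
  have cvx: "convex_on UNIV \<Phi>" using Y1 by (simp add: young_def)
  show ?thesis
  proof (intro exI[of _ Y] conjI allI)
    show "0 \<le> Y" using Ypos by simp
    fix x
    define y where "y = Inf ((\<lambda>t. (\<Phi> x - \<Phi> t) / (x - t)) ` ({x<..} \<inter> UNIV))"
    have sub: "\<Phi> z \<ge> \<Phi> x + y * (z - x)" for z
      unfolding y_def by (rule convex_le_Inf_differential[OF cvx]) auto
    have "\<Phi>s y = (SUP z. z * y - \<Phi> z)" and bdd: "bdd_above (range (\<lambda>z. z * y - \<Phi> z))"
      using leg by (auto simp: legendre_of_def)
    moreover have "(SUP z. z * y - \<Phi> z) \<le> x * y - \<Phi> x"
    proof (rule cSUP_least)
      fix z show "z * y - \<Phi> z \<le> x * y - \<Phi> x" using sub[of z] by (simp add: algebra_simps)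
    qed simp
    ultimately have key: "\<Phi> x \<le> x * y - \<Phi>s y" by simp
    show "\<Phi> x \<le> Y * \<bar>x\<bar> + \<eta> * x\<^sup>2"
    proof (cases "\<bar>y\<bar> \<ge> Y")
      case True
      have "x * y - M * y\<^sup>2 \<le> x\<^sup>2 / (4 * M)"
      proof -
        have "0 \<le> (2 * M * y - x)\<^sup>2 / (4 * M)" using Mpos by simp
        also have "(2 * M * y - x)\<^sup>2 / (4 * M) = x\<^sup>2 / (4 * M) - (x * y - M * y\<^sup>2)"
          using Mpos by (simp add: field_simps power2_eq_square)
        finally show ?thesis by simp
      qed
      moreover have "x\<^sup>2 / (4 * M) = \<eta> * x\<^sup>2" using eta by (simp add: M_def)
      ultimately show ?thesis using key big[OF True] Ypos
        by (smt (verit) mult_nonneg_nonneg abs_ge_zero)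
    next
      case False
      have "x * y \<le> Y * \<bar>x\<bar>"
      proof -
        have "x * y \<le> \<bar>x\<bar> * \<bar>y\<bar>" by (metis abs_ge_self abs_mult)
        also have "\<dots> \<le> \<bar>x\<bar> * Y" using False by (intro mult_left_mono) auto
        finally show ?thesis by (simp add: mult.commute)
      qed
      then show ?thesis using key nn[of y] eta by (smt (verit) zero_le_power2 mult_nonneg_nonneg)
    qed
  qed
qed



lemma gibbs_finite:
  fixes V :: "real^'n \<Rightarrow> real"
  assumes V_int: "integrable lborel (\<lambda>x. exp (- V x))"
  shows "finite_measure (gibbs V)"
proof -
  define Z where "Z = (\<integral>y. exp (- V y) \<partial>lborel)"
  have Zpos: "Z > 0"
  proof -
    have "Z \<ge> 0" unfolding Z_def by (simp add: integral_nonneg_AE)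
    moreover have "Z \<noteq> 0"
    proof
      assume "Z = 0"
      then have "AE x in lborel. exp (- V x) = 0"
        using integral_nonneg_eq_0_iff_AE[OF V_int] unfolding Z_def by simp
      then have "AE x in (lborel :: (real^'n) measure). False" by simp
      then have "ae_filter (lborel :: (real^'n) measure) = bot" using trivial_limit_def by blast
      then show False by (simp add: ae_filter_eq_bot_iff)
    qed
    ultimately show ?thesis by simp
  qed
  have int2: "integrable lborel (\<lambda>x. exp (- V x) / Z)" using V_int by simp
  have meas: "(\<lambda>x. ennreal (exp (- V x) / Z)) \<in> borel_measurable lborel"
    using borel_measurable_integrable[OF int2] by measurable
  have "emeasure (gibbs V) (space (gibbs V)) = (\<integral>\<^sup>+ x. ennreal (exp (- V x) / Z) \<partial>lborel)"
    unfolding gibbs_def Z_def[symmetric]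
    by (simp add: emeasure_density[OF meas])
  also have "\<dots> = ennreal (\<integral>x. exp (- V x) / Z \<partial>lborel)"
    by (rule nn_integral_eq_integral[OF int2]) (use Zpos in simp)
  also have "(\<integral>x. exp (- V x) / Z \<partial>lborel) = 1"
    using Zpos by (simp add: Z_def)
  finally show ?thesis by (intro finite_measureI) simp
qed



lemma lux_bound:
  fixes M :: "'a measure" and f :: "'a \<Rightarrow> real"
  assumes fin: "finite_measure M" and fm: "f \<in> borel_measurable M"
    and sq: "integrable M (\<lambda>x. (f x)\<^sup>2)"
    and phi: "\<And>x. \<Phi> x \<le> a * \<bar>x\<bar> + (\<epsilon> / 2) * x\<^sup>2" and a: "a \<ge> 0" and eps: "\<epsilon> > 0"
    and Apos: "(\<integral>x. (f x)\<^sup>2 \<partial>M) > 0"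
  shows "sqrt (\<epsilon> * (\<integral>x. (f x)\<^sup>2 \<partial>M) + 4 * a\<^sup>2 * (\<integral>x. \<bar>f x\<bar> \<partial>M)\<^sup>2) \<in> lux_set \<Phi> M f"
proof -
  define A where "A = (\<integral>x. (f x)\<^sup>2 \<partial>M)"
  define B where "B = (\<integral>x. \<bar>f x\<bar> \<partial>M)"
  define l where "l = sqrt (\<epsilon> * A + 4 * a\<^sup>2 * B\<^sup>2)"
  have Bnn: "B \<ge> 0" unfolding B_def by simp
  have int1: "integrable M (\<lambda>x. \<bar>f x\<bar>)"
  proof (rule Bochner_Integration.integrable_bound)
    show "integrable M (\<lambda>x. 1 + (f x)\<^sup>2)"
      by (rule Bochner_Integration.integrable_add[OF finite_measure.integrable_const[OF fin] sq])
    show "(\<lambda>x. \<bar>f x\<bar>) \<in> borel_measurable M" using fm by measurable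
    show "AE x in M. norm \<bar>f x\<bar> \<le> norm (1 + (f x)\<^sup>2)"
    proof (rule AE_I2)
      fix x
      have "0 \<le> (\<bar>f x\<bar> - 1)\<^sup>2" by simp
      moreover have "(\<bar>f x\<bar> - 1)\<^sup>2 = (f x)\<^sup>2 - 2 * \<bar>f x\<bar> + 1"
        by (simp add: power2_diff)
      ultimately have "\<bar>f x\<bar> \<le> 1 + (f x)\<^sup>2"
        using abs_ge_zero[of "f x"] by linarith
      then show "norm \<bar>f x\<bar> \<le> norm (1 + (f x)\<^sup>2)" by simp
    qed
  qed
  have l2: "l\<^sup>2 = \<epsilon> * A + 4 * a\<^sup>2 * B\<^sup>2"
    unfolding l_def using eps Apos by (simp add: A_def)
  have lpos: "l > 0" unfolding l_def using eps Apos by (simp add: A_def add_pos_nonneg)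
  have "2 * a * B \<le> l"
  proof -
    have "(2 * a * B)\<^sup>2 \<le> l\<^sup>2" using l2 eps Apos by (simp add: A_def power_mult_distrib)
    then have "sqrt ((2 * a * B)\<^sup>2) \<le> sqrt (l\<^sup>2)" by (rule real_sqrt_le_mono)
    then show ?thesis using lpos a Bnn by simp
  qed
  then have t1: "a * B / l \<le> 1 / 2" using lpos by (simp add: divide_simps)
  have "\<epsilon> * A \<le> l\<^sup>2" using l2 by simp
  then have t2: "(\<epsilon> / 2) * A / l\<^sup>2 \<le> 1 / 2"
    using lpos by (simp add: divide_simps)
  have "(\<integral>\<^sup>+ x. ennreal (\<Phi> (\<bar>f x\<bar> / l)) \<partial>M)
      \<le> (\<integral>\<^sup>+ x. ennreal (a / l * \<bar>f x\<bar> + (\<epsilon> / 2 / l\<^sup>2) * (f x)\<^sup>2) \<partial>M)"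
  proof (rule nn_integral_mono)
    fix x
    have "\<Phi> (\<bar>f x\<bar> / l) \<le> a * \<bar>\<bar>f x\<bar> / l\<bar> + (\<epsilon> / 2) * (\<bar>f x\<bar> / l)\<^sup>2" by (rule phi)
    also have "\<dots> = a / l * \<bar>f x\<bar> + (\<epsilon> / 2 / l\<^sup>2) * (f x)\<^sup>2"
      using lpos by (simp add: power_divide)
    finally show "ennreal (\<Phi> (\<bar>f x\<bar> / l)) \<le> ennreal (a / l * \<bar>f x\<bar> + (\<epsilon> / 2 / l\<^sup>2) * (f x)\<^sup>2)"
      by (rule ennreal_leI)
  qed
  also have "\<dots> = ennreal (\<integral>x. a / l * \<bar>f x\<bar> + (\<epsilon> / 2 / l\<^sup>2) * (f x)\<^sup>2 \<partial>M)"
    by (rule nn_integral_eq_integral) (use int1 sq lpos a eps in auto)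
  also have "(\<integral>x. a / l * \<bar>f x\<bar> + (\<epsilon> / 2 / l\<^sup>2) * (f x)\<^sup>2 \<partial>M) = a * B / l + (\<epsilon> / 2) * A / l\<^sup>2"
    using int1 sq by (simp add: A_def B_def)
  also have "ennreal (a * B / l + (\<epsilon> / 2) * A / l\<^sup>2) \<le> 1"
  proof -
    have "a * B / l + (\<epsilon> / 2) * A / l\<^sup>2 \<le> 1" using t1 t2 by linarith
    then show ?thesis by (simp del: times_divide_eq_left divide_divide_eq_left)
  qed
  finally show ?thesis using lpos unfolding lux_set_def l_def A_def B_def by simp
qed

theorem theorem3p3:
  fixes V :: "real^'n \<Rightarrow> real" and \<Phi> \<Phi>s :: "real \<Rightarrow> real"
    and r0 :: real and \<beta> :: "real \<Rightarrow> real"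
  assumes V_smooth: "smooth_fun V"
    and V_int: "integrable lborel (\<lambda>x. exp (- V x))"
    and Y1: "young \<Phi>" and Y2: "young \<Phi>s" and leg: "legendre_of \<Phi> \<Phi>s"
    and growth: "filterlim (\<lambda>x. \<Phi>s x / x\<^sup>2) at_top at_top"
    and Y3: "young (\<lambda>x. \<Phi>s (sqrt \<bar>x\<bar>))"
    and r0: "0 \<le> r0"
    and beta_nonneg: "\<forall>r>r0. 0 \<le> \<beta> r"
    and SP: "\<forall>r>r0. \<forall>f. admissible (gibbs V) f \<and> lux_set \<Phi> (gibbs V) f \<noteq> {} \<longrightarrow>
       (\<integral>x. (f x)\<^sup>2 \<partial>gibbs V)
         \<le> r * (\<integral>x. (norm (grad f x))\<^sup>2 \<partial>gibbs V) + \<beta> r * (lux_norm \<Phi> (gibbs V) f)\<^sup>2"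
  shows "\<exists>\<beta>'. (\<forall>r>8 * r0. 0 \<le> \<beta>' r) \<and>
     (\<forall>r>8 * r0. \<forall>f. admissible (gibbs V) f \<longrightarrow>
       (\<integral>x. (f x)\<^sup>2 \<partial>gibbs V)
         \<le> r * (\<integral>x. (norm (grad f x))\<^sup>2 \<partial>gibbs V) + \<beta>' r * (\<integral>x. \<bar>f x\<bar> \<partial>gibbs V)\<^sup>2)"
  proof -
  let ?M = "gibbs V"
  have fin: "finite_measure ?M" by (rule gibbs_finite[OF V_int])
  have ex: "\<exists>a\<ge>0. \<forall>x. \<Phi> x \<le> a * \<bar>x\<bar> + (\<epsilon> / 2) * x\<^sup>2" if "\<epsilon> > 0" for \<epsilon> :: real
    by (rule phi_bound[OF Y1 Y2 leg growth]) (use that in simp)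
  define aF where "aF \<epsilon> = (SOME a. a \<ge> 0 \<and> (\<forall>x. \<Phi> x \<le> a * \<bar>x\<bar> + (\<epsilon> / 2) * x\<^sup>2))" for \<epsilon> :: real
  have aF: "aF \<epsilon> \<ge> 0 \<and> (\<forall>x. \<Phi> x \<le> aF \<epsilon> * \<bar>x\<bar> + (\<epsilon> / 2) * x\<^sup>2)" if "\<epsilon> > 0" for \<epsilon> :: real
    unfolding aF_def by (rule someI_ex) (use ex[OF that] in blast)
  define epsF where "epsF r = 1 / (2 * (\<beta> (r / 2) + 1))" for r :: real
  define \<beta>' where "\<beta>' r = 8 * \<beta> (r / 2) * (aF (epsF r))\<^sup>2" for r :: real
  show ?thesis
  proof (intro exI[of _ \<beta>'] conjI allI impI)
    fix r :: real assume r: "r > 8 * r0"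
    then have sr: "r / 2 > r0" using r0 by linarith
    then have bnn: "\<beta> (r / 2) \<ge> 0" using beta_nonneg by blast
    then show "0 \<le> \<beta>' r" unfolding \<beta>'_def by simp
  next
    fix r :: real and f assume r: "r > 8 * r0" and adm: "admissible ?M f"
    define s where "s = r / 2"
    have sr: "s > r0" using r r0 unfolding s_def by linarith
    have rpos: "r > 0" using r r0 by linarith
    define b where "b = \<beta> s"
    have bnn: "b \<ge> 0" using beta_nonneg sr unfolding b_def by blast
    define \<epsilon> where "\<epsilon> = epsF r"
    have eps_def': "\<epsilon> = 1 / (2 * (b + 1))" unfolding \<epsilon>_def epsF_def b_def s_def ..
    have epos: "\<epsilon> > 0" using bnn unfolding eps_def' by simp
    define a where "a = aF \<epsilon>"
    have a: "a \<ge> 0" "\<And>x. \<Phi> x \<le> a * \<bar>x\<bar> + (\<epsilon> / 2) * x\<^sup>2" using aF[OF epos] unfolding a_def by auto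
    have b'def: "\<beta>' r = 8 * b * a\<^sup>2" unfolding \<beta>'_def b_def s_def a_def \<epsilon>_def ..
    define A where "A = (\<integral>x. (f x)\<^sup>2 \<partial>?M)"
    define B where "B = (\<integral>x. \<bar>f x\<bar> \<partial>?M)"
    define G where "G = (\<integral>x. (norm (grad f x))\<^sup>2 \<partial>?M)"
    have Gnn: "G \<ge> 0" unfolding G_def by simp
    have Ann: "A \<ge> 0" unfolding A_def by simp
    have fm: "f \<in> borel_measurable ?M" and sq: "integrable ?M (\<lambda>x. (f x)\<^sup>2)"
      using adm by (auto simp: admissible_def)
    show "A \<le> r * G + \<beta>' r * B\<^sup>2"
    proof (cases "A = 0")
      case True
      then show ?thesis using Gnn rpos bnn a b'def
        by (simp add: mult_nonneg_nonneg)
    next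
      case False
      then have Apos: "A > 0" using Ann by simp
      define l where "l = sqrt (\<epsilon> * A + 4 * a\<^sup>2 * B\<^sup>2)"
      have lin: "l \<in> lux_set \<Phi> ?M f"
        unfolding l_def A_def B_def
        by (rule lux_bound[OF fin fm sq a(2) a(1) epos]) (use Apos in \<open>simp add: A_def\<close>)
      have bdd: "bdd_below (lux_set \<Phi> ?M f)"
        by (rule bdd_belowI[of _ 0]) (auto simp: lux_set_def)
      have Lle: "lux_norm \<Phi> ?M f \<le> l" unfolding lux_norm_def by (rule cInf_lower[OF lin bdd])
      have Lnn: "0 \<le> lux_norm \<Phi> ?M f" unfolding lux_norm_def
        using lin by (intro cInf_greatest) (auto simp: lux_set_def)
      have "(lux_norm \<Phi> ?M f)\<^sup>2 \<le> l\<^sup>2" using Lle Lnn by (rule power_mono)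
      also have "l\<^sup>2 = \<epsilon> * A + 4 * a\<^sup>2 * B\<^sup>2" unfolding l_def using epos Apos by simp
      finally have L2: "(lux_norm \<Phi> ?M f)\<^sup>2 \<le> \<epsilon> * A + 4 * a\<^sup>2 * B\<^sup>2" .
      have "A \<le> s * G + b * (lux_norm \<Phi> ?M f)\<^sup>2"
        using SP sr adm lin unfolding A_def G_def b_def by blast
      also have "\<dots> \<le> s * G + b * (\<epsilon> * A + 4 * a\<^sup>2 * B\<^sup>2)"
        using L2 bnn by (simp add: mult_left_mono)
      finally have main: "A \<le> s * G + (b * \<epsilon>) * A + 4 * b * a\<^sup>2 * B\<^sup>2" by (simp add: algebra_simps)
      have "b * \<epsilon> \<le> 1 / 2" unfolding eps_def' using bnn by (simp add: divide_simps)
      then have "(b * \<epsilon>) * A \<le> A / 2" using Ann by (metis mult_right_mono times_divide_eq_left mult_1)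
      then have "A \<le> 2 * s * G + 8 * b * a\<^sup>2 * B\<^sup>2" using main by linarith
      then show ?thesis unfolding b'def s_def by simp
    qed
  qed
qed

end
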